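(* Let $\mathscr{D}$ be a nonnegative integer-valued random variable with $\mathbb{P}(\mathscr{D}>t)=\mathcal{L}(t)t^{-\gamma}$, $\mathcal{L}$ slowly varying, $1<\gamma<2$. Let $D_1,\dots,D_n$ be i.i.d. copies, $G_n$ the configuration model with these degrees and $Z_n$ the number of edges removed when forming the erased configuration model from $G_n$. Then for every $\delta>0$, $Z_n/n^{2-\gamma+\delta}\to0$ in probability.
   Context: Configuration model: vertex $i$ gets $D_i$ half-edges (one added if the sum is odd; ignored), paired uniformly at random; $X_{ij}$ is the number of edges between $i\ne j$ and $X_{ii}$ the number of self-loops at $i$. The erased configuration model removes self-loops and merges multiple edges; the number of removed edges is $Z_n=\sum_{i=1}^nX_{ii}+\sum_{1\le i<j\le n}(X_{ij}-\mathbf 1\{X_{ij}>0\})$. *)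

theory Defs
  imports "HOL-Probability.Probability"
begin

definition slowly_varying :: "(real \<Rightarrow> real) \<Rightarrow> bool" where
  "slowly_varying L \<longleftrightarrow> (\<forall>x>0. L x > 0) \<and>
     (\<forall>a>0. ((\<lambda>x. L (a * x) / L x) \<longlongrightarrow> 1) at_top)"

definition cm_degrees :: "nat \<Rightarrow> (nat \<Rightarrow> nat) \<Rightarrow> nat \<Rightarrow> nat" where
  "cm_degrees n d = (if odd (\<Sum>i<n. d i) then d(n - 1 := d (n - 1) + 1) else d)"

definition half_edges :: "nat \<Rightarrow> (nat \<Rightarrow> nat) \<Rightarrow> (nat \<times> nat) set" where
  "half_edges n d = {(i, k). i < n \<and> k < d i}"

text \<open>Perfect matchings of a set H, as fixed-point-free involutions on H
  (identity outside H).\<close>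
definition pairings :: "'a set \<Rightarrow> ('a \<Rightarrow> 'a) set" where
  "pairings H = {f. (\<forall>x\<in>H. f x \<in> H \<and> f x \<noteq> x \<and> f (f x) = x) \<and> (\<forall>x. x \<notin> H \<longrightarrow> f x = x)}"

text \<open>Number of edges between distinct vertices i and j, and number of self-loops at i.\<close>
definition cm_X :: "(nat \<times> nat) set \<Rightarrow> ((nat \<times> nat) \<Rightarrow> (nat \<times> nat)) \<Rightarrow> nat \<Rightarrow> nat \<Rightarrow> nat" where
  "cm_X H f i j = (if i = j then card {h\<in>H. fst h = i \<and> fst (f h) = i} div 2
                   else card {h\<in>H. fst h = i \<and> fst (f h) = j})"

text \<open>Number of edges removed when erasing self-loops and multiple edges.\<close>
definition cm_Z :: "nat \<Rightarrow> (nat \<times> nat) set \<Rightarrow> ((nat \<times> nat) \<Rightarrow> (nat \<times> nat)) \<Rightarrow> nat" where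
  "cm_Z n H f = (\<Sum>i<n. cm_X H f i i) +
     (\<Sum>(i, j)\<in>{(i, j). i < j \<and> j < n}. cm_X H f i j - (if cm_X H f i j > 0 then 1 else 0))"

definition Z_distr :: "nat pmf \<Rightarrow> nat \<Rightarrow> nat pmf" where
  "Z_distr p n =
     Pi_pmf {..<n} 0 (\<lambda>_. p) \<bind>
       (\<lambda>D. let H = half_edges n (cm_degrees n D) in
             map_pmf (cm_Z n H) (pmf_of_set (pairings H)))"

end

theory Submission
  imports Defs
begin

definition sw :: "'a \<Rightarrow> 'a \<Rightarrow> 'a \<Rightarrow> 'a" where
  "sw u v x = (if x = u then v else if x = v then u else x)"

lemma sw_sw[simp]: "sw u v (sw u v x) = x"
  by (auto simp: sw_def)

lemma sw_other[simp]: "x \<noteq> u \<Longrightarrow> x \<noteq> v \<Longrightarrow> sw u v x = x"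
  by (auto simp: sw_def)

lemma sw_u[simp]: "sw u v u = v" and sw_v[simp]: "sw u v v = u"
  by (auto simp: sw_def)

lemma sw_inj: "sw u v x = sw u v y \<longleftrightarrow> x = y"
  by (metis sw_sw)

lemma sw_in: "u \<in> H \<Longrightarrow> v \<in> H \<Longrightarrow> sw u v x \<in> H \<longleftrightarrow> x \<in> H"
  by (auto simp: sw_def)

definition cnj :: "'a \<Rightarrow> 'a \<Rightarrow> ('a \<Rightarrow> 'a) \<Rightarrow> ('a \<Rightarrow> 'a)" where
  "cnj u v f = (\<lambda>x. sw u v (f (sw u v x)))"

lemma cnj_apply[simp]: "x \<noteq> u \<Longrightarrow> x \<noteq> v \<Longrightarrow> cnj u v f x = sw u v (f x)"
  by (simp add: cnj_def)

lemma cnj_cnj[simp]: "cnj u v (cnj u v f) = f"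
  by (simp add: cnj_def)

lemma cnj_pairings:
  assumes "u \<in> H" "v \<in> H" "f \<in> pairings H"
  shows "cnj u v f \<in> pairings H"
proof -
  have f: "\<And>x. x \<in> H \<Longrightarrow> f x \<in> H \<and> f x \<noteq> x \<and> f (f x) = x" "\<And>x. x \<notin> H \<Longrightarrow> f x = x"
    using assms(3) by (auto simp: pairings_def)
  show ?thesis unfolding pairings_def cnj_def
  proof (intro CollectI conjI ballI allI impI)
    fix x assume x: "x \<in> H"
    then have sx: "sw u v x \<in> H" using sw_in assms by metis
    show "sw u v (f (sw u v x)) \<in> H" using f(1)[OF sx] sw_in assms by metis
    show "sw u v (f (sw u v x)) \<noteq> x"
      using f(1)[OF sx] by (metis sw_sw)
    show "sw u v (f (sw u v (sw u v (f (sw u v x))))) = x"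
      using f(1)[OF sx] by simp
  next
    fix x assume x: "x \<notin> H"
    then have "x \<noteq> u" "x \<noteq> v" using assms by auto
    then show "sw u v (f (sw u v x)) = x" using f(2) x by simp
  qed
qed

lemma card_invol_eq:
  assumes "\<And>x. \<phi> (\<phi> x) = x" "\<phi> ` A \<subseteq> B" "\<phi> ` B \<subseteq> A" "finite A" "finite B"
  shows "card A = card B"
proof -
  have inj: "inj_on \<phi> X" for X by (metis assms(1) inj_onI)
  show ?thesis using card_inj_on_le[OF inj assms(2) assms(5)] card_inj_on_le[OF inj assms(3) assms(4)]
    by simp
qed

lemma card_fibres:
  assumes "finite A" "finite B" "\<And>x. x \<in> A \<Longrightarrow> g x \<in> B"
  shows "card A = (\<Sum>b\<in>B. card {x\<in>A. g x = b})"
proof -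
  have "A = (\<Union>b\<in>B. {x\<in>A. g x = b})" using assms(3) by auto
  then have "card A = card (\<Union>b\<in>B. {x\<in>A. g x = b})" by simp
  also have "\<dots> = (\<Sum>b\<in>B. card {x\<in>A. g x = b})"
    using assms by (intro card_UN_disjoint) auto
  finally show ?thesis .
qed

lemma pairings_finite:
  assumes "finite H"
  shows "finite (pairings H)"
proof -
  have "inj_on (\<lambda>f. restrict f H) (pairings H)"
    by (rule inj_onI) (auto simp: pairings_def fun_eq_iff restrict_def split: if_splits, metis)
  moreover have "(\<lambda>f. restrict f H) ` pairings H \<subseteq> PiE H (\<lambda>_. H)"
    by (auto simp: pairings_def)
  moreover have "finite (PiE H (\<lambda>_. H))" using assms by (simp add: finite_PiE)
  ultimately show ?thesis by (meson finite_imageD finite_subset)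
qed

lemma pairings_nonempty:
  "finite H \<Longrightarrow> even (card H) \<Longrightarrow> pairings H \<noteq> {}"
proof (induction "card H" arbitrary: H rule: less_induct)
  case less
  show ?case
  proof (cases "H = {}")
    case True
    then have "id \<in> pairings H" by (auto simp: pairings_def)
    then show ?thesis by blast
  next
    case False
    then obtain a where a: "a \<in> H" by blast
    have "card H \<noteq> 1" using less.prems by auto
    have "H - {a} \<noteq> {}"
    proof
      assume "H - {a} = {}"
      then have "H = {a}" using a by auto
      then show False using \<open>card H \<noteq> 1\<close> by simp
    qed
    then obtain b where b: "b \<in> H" "b \<noteq> a" by blast
    define H' where "H' = H - {a, b}"
    have cH': "card H' = card H - 2" using a b less.prems(1) unfolding H'_def
      by (simp add: card_Diff_subset)
    have "card H \<ge> 2" using a b less.prems(1)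
      by (metis card_2_iff card_mono empty_subsetI insert_subset)
    then have "card H' < card H" "even (card H')" using cH' less.prems by auto
    then obtain g where g: "g \<in> pairings H'" using less.hyps[of H'] less.prems(1) H'_def by auto
    define f where "f = g(a := b, b := a)"
    have "f \<in> pairings H"
      using g a b unfolding pairings_def f_def H'_def by auto
    then show ?thesis by blast
  qed
qed

lemma pairing_props:
  assumes "f \<in> pairings H"
  shows "\<And>x. x \<in> H \<Longrightarrow> f x \<in> H" "\<And>x. x \<in> H \<Longrightarrow> f x \<noteq> x" "\<And>x. x \<in> H \<Longrightarrow> f (f x) = x"
    "\<And>x. x \<notin> H \<Longrightarrow> f x = x"
  using assms by (auto simp: pairings_def)

lemma card_pair1:
  assumes "finite H" "a \<in> H" "b \<in> H" "a \<noteq> b"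
  shows "card (pairings H) = (card H - 1) * card {f\<in>pairings H. f a = b}"
proof -
  let ?P = "pairings H"
  have fin: "finite ?P" using pairings_finite assms by blast
  have "card ?P = (\<Sum>b'\<in>H-{a}. card {f\<in>?P. f a = b'})"
    using fin assms by (intro card_fibres) (auto dest: pairing_props)
  also have "\<dots> = (\<Sum>b'\<in>H-{a}. card {f\<in>?P. f a = b})"
  proof (intro sum.cong refl)
    fix b' assume b': "b' \<in> H - {a}"
    have ca: "cnj b b' f a = sw b b' (f a)" for f
      using b' assms by (auto simp: cnj_def sw_def)
    show "card {f\<in>?P. f a = b'} = card {f\<in>?P. f a = b}"
      apply (rule card_invol_eq[where \<phi>="cnj b b'"])
      using b' assms fin by (auto intro: cnj_pairings finite_subset[OF _ fin])
  qed
  also have "\<dots> = (card H - 1) * card {f\<in>?P. f a = b}"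
    using assms by simp
  finally show ?thesis .
qed

lemma card_pair2:
  assumes "finite H" "a \<in> H" "b \<in> H" "c \<in> H" "e \<in> H" "distinct [a, b, c, e]"
  shows "card {f\<in>pairings H. f a = b} = (card H - 3) * card {f\<in>pairings H. f a = b \<and> f c = e}"
proof -
  let ?P = "pairings H"
  let ?Q = "{f\<in>?P. f a = b}"
  have fin: "finite ?Q" using pairings_finite[OF assms(1)] by (rule finite_subset[rotated]) auto
  have "card ?Q = (\<Sum>e'\<in>H-{a,b,c}. card {f\<in>?Q. f c = e'})"
  proof (intro card_fibres fin)
    fix f assume f: "f \<in> ?Q"
    then have "f c \<in> H" "f c \<noteq> c" "f b = a" using assms pairing_props[of f H] by auto
    moreover have "f c \<noteq> a" using f pairing_props(3)[of f H c] assms by auto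
    moreover have "f c \<noteq> b" using f pairing_props(3)[of f H c] assms \<open>f b = a\<close> by auto
    ultimately show "f c \<in> H - {a, b, c}" by auto
  qed (use assms in auto)
  also have "\<dots> = (\<Sum>e'\<in>H-{a,b,c}. card {f\<in>?Q. f c = e})"
  proof (intro sum.cong refl)
    fix e' assume e': "e' \<in> H - {a, b, c}"
    have ca: "cnj e e' f x = sw e e' (f x)" if "x \<in> {a, c}" for f x
      using e' assms that by (auto simp: cnj_def)
    have sb: "sw e e' b = b" using e' assms by auto
    show "card {f\<in>?Q. f c = e'} = card {f\<in>?Q. f c = e}"
      apply (rule card_invol_eq[where \<phi>="cnj e e'"])
      using e' assms fin by (auto intro: cnj_pairings finite_subset[OF _ fin])
  qed
  also have "\<dots> = (card H - 3) * card {f\<in>?Q. f c = e}"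
  proof -
    have "card (H - {a,b,c}) = card H - card {a,b,c}"
      using assms by (intro card_Diff_subset) auto
    also have "card {a,b,c} = 3" using assms by simp
    finally show ?thesis by simp
  qed
  finally show ?thesis by (simp add: conj_assoc)
qed


lemma he_Sigma: "half_edges n d = (SIGMA i:{..<n}. {..<d i})"
  by (auto simp: half_edges_def)

lemma he_finite: "finite (half_edges n d)"
  by (simp add: he_Sigma)

lemma card_he: "card (half_edges n d) = (\<Sum>i<n. d i)"
  by (simp add: he_Sigma card_SigmaI)

lemma card_Hs: "card {h\<in>half_edges n d. fst h = i} \<le> d i"
proof -
  have "{h\<in>half_edges n d. fst h = i} \<subseteq> (\<lambda>k. (i,k)) ` {..<d i}"
    by (auto simp: half_edges_def)
  then have "card {h\<in>half_edges n d. fst h = i} \<le> card ((\<lambda>k. (i,k)) ` {..<d i})"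
    by (intro card_mono) auto
  also have "\<dots> \<le> d i" using card_image_le[of "{..<d i}" "\<lambda>k. (i,k)"] by simp
  finally show ?thesis .
qed

lemma card_filter_real:
  "finite A \<Longrightarrow> real (card {x\<in>A. Q x}) = (\<Sum>x\<in>A. if Q x then 1 else 0)"
  by (simp add: sum.inter_filter[symmetric])

lemma card_offdiag:
  assumes "finite A"
  shows "card {(x,y)\<in>A\<times>A. x \<noteq> y} = card A * (card A - 1)"
proof -
  have "{(x,y)\<in>A\<times>A. x \<noteq> y} = A\<times>A - (\<lambda>x. (x,x)) ` A" by auto
  then have "card {(x,y)\<in>A\<times>A. x \<noteq> y} = card (A\<times>A) - card ((\<lambda>x. (x,x)) ` A)"
    using assms by (simp add: card_Diff_subset finite_cartesian_product image_subset_iff)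
  also have "card ((\<lambda>x. (x,x)) ` A) = card A" by (simp add: card_image inj_on_def)
  finally show ?thesis by (simp add: card_cartesian_product diff_mult_distrib2)
qed

locale cmsetup =
  fixes n :: nat and d :: "nat \<Rightarrow> nat"
  assumes M5: "card (half_edges n d) \<ge> 5"
  assumes Pne: "pairings (half_edges n d) \<noteq> {}"
begin

abbreviation "H \<equiv> half_edges n d"
abbreviation "P \<equiv> pairings H"
abbreviation "M \<equiv> card H"
definition "Hs i = {h\<in>H. fst h = i}"

lemma finH: "finite H" by (rule he_finite)
lemma finP: "finite P" by (rule pairings_finite[OF finH])
lemma finHs: "finite (Hs i)" using finH by (simp add: Hs_def)
lemma Hs_sub: "Hs i \<subseteq> H" by (auto simp: Hs_def)
lemma cardHs: "card (Hs i) \<le> d i" using card_Hs by (simp add: Hs_def)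

lemma C1: assumes "h \<in> H" "g \<in> H"
  shows "real (card {f\<in>P. f h = g}) \<le> real (card P) / (real M - 1)"
proof (cases "h = g")
  case True
  then have "{f\<in>P. f h = g} = {}" using pairing_props(2)[OF _ assms(1)] by auto
  then have "card {f\<in>P. f h = g} = 0" by (simp only: card.empty)
  then show ?thesis using M5 by simp
next
  case False
  have "card P = (M - 1) * card {f\<in>P. f h = g}" using card_pair1[OF finH assms False] .
  then have "real (card P) = (real M - 1) * real (card {f\<in>P. f h = g})"
    using M5 by (simp add: of_nat_diff)
  then show ?thesis using M5 by (simp add: field_simps)
qed

lemma C2: assumes "h \<in> H" "g \<in> H" "h' \<in> H" "g' \<in> H" "h \<noteq> h'" "h \<noteq> g" "h \<noteq> g'" "h' \<noteq> g" "h' \<noteq> g'"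
  shows "real (card {f\<in>P. f h = g \<and> f h' = g'}) \<le> real (card P) / ((real M - 1) * (real M - 3))"
proof (cases "g = g'")
  case True
  have F: False if "f \<in> P" "f h = g" "f h' = g'" for f
  proof -
    have "h = h'" using pairing_props(3)[OF \<open>f\<in>P\<close>] that assms True by metis
    then show False using assms by simp
  qed
  have "{f\<in>P. f h = g \<and> f h' = g'} = {}" using F by blast
  then have "card {f\<in>P. f h = g \<and> f h' = g'} = 0" by (simp only: card.empty)
  then show ?thesis using M5 by simp
next
  case False
  have e1: "card P = (M - 1) * card {f\<in>P. f h = g}" using card_pair1[OF finH assms(1,2) assms(6)] .
  have e2: "card {f\<in>P. f h = g} = (M - 3) * card {f\<in>P. f h = g \<and> f h' = g'}"
    using card_pair2[OF finH assms(1,2,3,4)] assms False by auto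
  have "real (card P) = (real M - 1) * ((real M - 3) * real (card {f\<in>P. f h = g \<and> f h' = g'}))"
    using M5 e1 e2 by (simp add: of_nat_diff)
  moreover have pos: "(real M - 1) * (real M - 3) > 0" using M5 by (intro mult_pos_pos) auto
  ultimately show ?thesis by (subst pos_le_divide_eq[OF pos]) (simp add: algebra_simps)
qed

lemma fH: "f \<in> P \<Longrightarrow> h \<in> H \<Longrightarrow> f h \<in> H" by (rule pairing_props(1))

lemma Xset: "f \<in> P \<Longrightarrow> {h\<in>H. fst h = i \<and> fst (f h) = j} = {h\<in>Hs i. f h \<in> Hs j}"
  unfolding Hs_def by (auto dest: fH)

lemma count_as_sum: "f \<in> P \<Longrightarrow> real (card {h\<in>Hs i. f h \<in> Hs j}) = (\<Sum>h\<in>Hs i. \<Sum>g\<in>Hs j. if f h = g then 1 else 0)"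
proof -
  have "real (card {h\<in>Hs i. f h \<in> Hs j}) = (\<Sum>h\<in>Hs i. if f h \<in> Hs j then 1 else 0)"
    by (rule card_filter_real[OF finHs])
  also have "\<dots> = (\<Sum>h\<in>Hs i. \<Sum>g\<in>Hs j. if f h = g then 1 else 0)"
    by (intro sum.cong refl) (simp only: sum.delta'[OF finHs])
  finally show ?thesis .
qed

lemma self_sum: "(\<Sum>f\<in>P. real (cm_X H f i i)) \<le> real (card P) * min (real (d i)) (real (d i)^2 / (real M - 1))"
proof -
  have le1: "real (cm_X H f i i) \<le> real (card {h\<in>Hs i. f h \<in> Hs i})" if "f \<in> P" for f
    using Xset[OF that] by (simp add: cm_X_def)
  have "(\<Sum>f\<in>P. real (cm_X H f i i)) \<le> (\<Sum>f\<in>P. real (card {h\<in>Hs i. f h \<in> Hs i}))"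
    by (intro sum_mono le1)
  also have "\<dots> = (\<Sum>f\<in>P. \<Sum>h\<in>Hs i. \<Sum>g\<in>Hs i. if f h = g then 1 else 0)"
    by (intro sum.cong refl count_as_sum)
  also have "\<dots> = (\<Sum>h\<in>Hs i. \<Sum>f\<in>P. \<Sum>g\<in>Hs i. if f h = g then 1 else 0)"
    by (rule sum.swap)
  also have "\<dots> = (\<Sum>h\<in>Hs i. \<Sum>g\<in>Hs i. \<Sum>f\<in>P. if f h = g then 1 else 0)"
    by (intro sum.cong refl sum.swap)
  also have "\<dots> = (\<Sum>h\<in>Hs i. \<Sum>g\<in>Hs i. real (card {f\<in>P. f h = g}))"
    by (intro sum.cong refl card_filter_real[OF finP, symmetric])
  also have "\<dots> \<le> (\<Sum>h\<in>Hs i. \<Sum>g\<in>Hs i. real (card P) / (real M - 1))"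
    using Hs_sub by (intro sum_mono C1) auto
  also have "\<dots> = real (card (Hs i))^2 * (real (card P) / (real M - 1))"
    by (simp add: power2_eq_square)
  also have "\<dots> \<le> real (d i)^2 * (real (card P) / (real M - 1))"
    using M5 cardHs by (intro mult_right_mono power_mono) auto
  finally have A: "(\<Sum>f\<in>P. real (cm_X H f i i)) \<le> real (card P) * (real (d i)^2 / (real M - 1))"
    by (simp add: mult.commute)
  have le2: "real (cm_X H f i i) \<le> real (d i)" if "f \<in> P" for f
  proof -
    have "cm_X H f i i \<le> card {h\<in>Hs i. f h \<in> Hs i}" using Xset[OF that] by (simp add: cm_X_def)
    also have "\<dots> \<le> card (Hs i)" using finHs by (intro card_mono) auto
    finally show ?thesis using cardHs[of i] by linarith
  qed
  have B: "(\<Sum>f\<in>P. real (cm_X H f i i)) \<le> real (card P) * real (d i)"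
    using sum_mono[OF le2, of P] by simp
  show ?thesis unfolding min_def using A B by auto
qed

lemma ind_sum: "finite B \<Longrightarrow> (\<Sum>g\<in>B. if x = g then 1 else 0) = (if x \<in> B then 1 else (0::real))"
  by (simp only: sum.delta')

lemma pair_sum1:
  assumes "i \<noteq> j"
  shows "(\<Sum>f\<in>P. real (cm_X H f i j)) \<le> real (card P) * (real (d i) * real (d j) / (real M - 1))"
proof -
  have "(\<Sum>f\<in>P. real (cm_X H f i j)) = (\<Sum>f\<in>P. real (card {h\<in>Hs i. f h \<in> Hs j}))"
    using assms by (intro sum.cong refl) (simp add: cm_X_def Xset)
  also have "\<dots> = (\<Sum>f\<in>P. \<Sum>h\<in>Hs i. \<Sum>g\<in>Hs j. if f h = g then 1 else 0)"
    by (intro sum.cong refl count_as_sum)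
  also have "\<dots> = (\<Sum>h\<in>Hs i. \<Sum>f\<in>P. \<Sum>g\<in>Hs j. if f h = g then 1 else 0)"
    by (rule sum.swap)
  also have "\<dots> = (\<Sum>h\<in>Hs i. \<Sum>g\<in>Hs j. \<Sum>f\<in>P. if f h = g then 1 else 0)"
    by (intro sum.cong refl sum.swap)
  also have "\<dots> = (\<Sum>h\<in>Hs i. \<Sum>g\<in>Hs j. real (card {f\<in>P. f h = g}))"
    by (intro sum.cong refl card_filter_real[OF finP, symmetric])
  also have "\<dots> \<le> (\<Sum>h\<in>Hs i. \<Sum>g\<in>Hs j. real (card P) / (real M - 1))"
    using Hs_sub by (intro sum_mono C1) auto
  also have "\<dots> = real (card (Hs i)) * real (card (Hs j)) * (real (card P) / (real M - 1))"
    by simp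
  also have "\<dots> \<le> real (d i) * real (d j) * (real (card P) / (real M - 1))"
    using M5 cardHs by (intro mult_right_mono mult_mono) auto
  finally show ?thesis by (simp add: mult.commute)
qed

lemma XX_as_sum:
  fixes i j :: nat
  assumes "f \<in> P"
  defines "Od \<equiv> {(h,h')\<in>Hs i \<times> Hs i. h \<noteq> h'}"
  shows "real (card {h\<in>Hs i. f h \<in> Hs j} * (card {h\<in>Hs i. f h \<in> Hs j} - 1)) =
    (\<Sum>x\<in>Od. \<Sum>g\<in>Hs j. \<Sum>g'\<in>Hs j. (if f (fst x) = g then 1 else 0) * (if f (snd x) = g' then 1 else 0))"
proof -
  let ?A = "{h\<in>Hs i. f h \<in> Hs j}"
  have finA: "finite ?A" using finHs by simp
  have finO: "finite Od" unfolding Od_def using finHs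
    by (intro finite_subset[OF _ finite_cartesian_product[OF finHs finHs]]) auto
  have "card ?A * (card ?A - 1) = card {(x,y)\<in>?A\<times>?A. x \<noteq> y}"
    by (rule card_offdiag[OF finA, symmetric])
  also have "{(x,y)\<in>?A\<times>?A. x \<noteq> y} = {x\<in>Od. f (fst x) \<in> Hs j \<and> f (snd x) \<in> Hs j}"
    unfolding Od_def by auto
  finally have "real (card ?A * (card ?A - 1)) = (\<Sum>x\<in>Od. if f (fst x) \<in> Hs j \<and> f (snd x) \<in> Hs j then 1 else 0)"
    using card_filter_real[OF finO] by simp
  also have "\<dots> = (\<Sum>x\<in>Od. (\<Sum>g\<in>Hs j. if f (fst x) = g then 1 else 0) * (\<Sum>g'\<in>Hs j. if f (snd x) = g' then 1 else 0))"
    by (intro sum.cong refl) (simp only: ind_sum[OF finHs], simp)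
  also have "\<dots> = (\<Sum>x\<in>Od. \<Sum>g\<in>Hs j. \<Sum>g'\<in>Hs j. (if f (fst x) = g then 1 else 0) * (if f (snd x) = g' then 1 else 0))"
    by (intro sum.cong refl sum_product)
  finally show ?thesis .
qed

lemma pair_sum2:
  assumes "i \<noteq> j"
  shows "(\<Sum>f\<in>P. real (cm_X H f i j * (cm_X H f i j - 1))) \<le>
     real (card P) * (real (d i)^2 * real (d j)^2 / ((real M - 1) * (real M - 3)))"
proof -
  define Od where "Od = {(h,h')\<in>Hs i \<times> Hs i. h \<noteq> h'}"
  have finO: "finite Od" unfolding Od_def using finHs
    by (intro finite_subset[OF _ finite_cartesian_product[OF finHs finHs]]) auto
  have cardO: "card Od \<le> d i ^ 2"
  proof -
    have "card Od \<le> card (Hs i \<times> Hs i)" unfolding Od_def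
      using finHs by (intro card_mono) auto
    also have "\<dots> = card (Hs i) ^ 2" by (simp add: card_cartesian_product power2_eq_square)
    also have "\<dots> \<le> d i ^ 2" using cardHs by (intro power_mono) auto
    finally show ?thesis .
  qed
  let ?c = "real (card P) / ((real M - 1) * (real M - 3))"
  have "(\<Sum>f\<in>P. real (cm_X H f i j * (cm_X H f i j - 1))) =
     (\<Sum>f\<in>P. \<Sum>x\<in>Od. \<Sum>g\<in>Hs j. \<Sum>g'\<in>Hs j. (if f (fst x) = g then 1 else 0) * (if f (snd x) = g' then 1 else 0))"
  proof (intro sum.cong refl)
    fix f assume f: "f \<in> P"
    have e: "cm_X H f i j = card {h\<in>Hs i. f h \<in> Hs j}" using assms f by (simp add: cm_X_def Xset)
    show "real (cm_X H f i j * (cm_X H f i j - 1)) = (\<Sum>x\<in>Od. \<Sum>g\<in>Hs j. \<Sum>g'\<in>Hs j. (if f (fst x) = g then 1 else 0) * (if f (snd x) = g' then 1 else 0))"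
      unfolding e Od_def by (rule XX_as_sum[OF f])
  qed
  also have "\<dots> = (\<Sum>x\<in>Od. \<Sum>f\<in>P. \<Sum>g\<in>Hs j. \<Sum>g'\<in>Hs j. (if f (fst x) = g then 1 else 0) * (if f (snd x) = g' then 1 else 0))"
    by (rule sum.swap)
  also have "\<dots> = (\<Sum>x\<in>Od. \<Sum>g\<in>Hs j. \<Sum>f\<in>P. \<Sum>g'\<in>Hs j. (if f (fst x) = g then 1 else 0) * (if f (snd x) = g' then 1 else 0))"
    by (intro sum.cong refl sum.swap)
  also have "\<dots> = (\<Sum>x\<in>Od. \<Sum>g\<in>Hs j. \<Sum>g'\<in>Hs j. \<Sum>f\<in>P. (if f (fst x) = g then 1 else 0) * (if f (snd x) = g' then 1 else 0))"
    by (intro sum.cong refl sum.swap)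
  also have "\<dots> = (\<Sum>x\<in>Od. \<Sum>g\<in>Hs j. \<Sum>g'\<in>Hs j. real (card {f\<in>P. f (fst x) = g \<and> f (snd x) = g'}))"
    by (intro sum.cong refl) (auto simp: card_filter_real[OF finP] intro!: sum.cong)
  also have "\<dots> \<le> (\<Sum>x\<in>Od. \<Sum>g\<in>Hs j. \<Sum>g'\<in>Hs j. ?c)"
  proof (intro sum_mono)
    fix x g g' assume x: "x \<in> Od" and g: "g \<in> Hs j" and g': "g' \<in> Hs j"
    have "fst x \<in> H" "snd x \<in> H" "fst (fst x) = i" "fst (snd x) = i" "fst x \<noteq> snd x"
      using x unfolding Od_def Hs_def by auto
    moreover have "g \<in> H" "g' \<in> H" "fst g = j" "fst g' = j" using g g' unfolding Hs_def by auto
    ultimately show "real (card {f\<in>P. f (fst x) = g \<and> f (snd x) = g'}) \<le> ?c"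
      using assms by (intro C2) auto
  qed
  also have "\<dots> = real (card Od) * real (card (Hs j))^2 * ?c"
    by (simp add: power2_eq_square)
  also have "\<dots> \<le> real (d i)^2 * real (d j)^2 * ?c"
  proof (intro mult_right_mono mult_mono)
    show "real (card Od) \<le> real (d i)^2" using cardO by (metis of_nat_le_iff of_nat_power)
    show "real (card (Hs j))^2 \<le> real (d j)^2" using cardHs by (intro power_mono) auto
    show "0 \<le> ?c" using M5 by (intro divide_nonneg_pos mult_pos_pos) auto
  qed auto
  finally show ?thesis by (simp add: mult.commute)
qed

lemma pair_sum:
  assumes "i \<noteq> j"
  shows "(\<Sum>f\<in>P. real (cm_X H f i j - (if cm_X H f i j > 0 then 1 else 0))) \<le>
     real (card P) * min (real (d i) * real (d j) / (real M - 1)) (real (d i)^2 * real (d j)^2 / ((real M - 1) * (real M - 3)))"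
proof -
  have p1: "real (x - (if x > 0 then 1 else 0)) \<le> real x" for x :: nat by auto
  have p2: "real (x - (if x > 0 then 1 else 0)) \<le> real (x * (x - 1))" for x :: nat
    by (cases x) auto
  have A: "(\<Sum>f\<in>P. real (cm_X H f i j - (if cm_X H f i j > 0 then 1 else 0))) \<le> real (card P) * (real (d i) * real (d j) / (real M - 1))"
    using sum_mono[of P "\<lambda>f. real (cm_X H f i j - (if cm_X H f i j > 0 then 1 else 0))" "\<lambda>f. real (cm_X H f i j)", OF p1] pair_sum1[OF assms] by linarith
  have B: "(\<Sum>f\<in>P. real (cm_X H f i j - (if cm_X H f i j > 0 then 1 else 0))) \<le> real (card P) * (real (d i)^2 * real (d j)^2 / ((real M - 1) * (real M - 3)))"
    using sum_mono[of P "\<lambda>f. real (cm_X H f i j - (if cm_X H f i j > 0 then 1 else 0))" "\<lambda>f. real (cm_X H f i j * (cm_X H f i j - 1))", OF p2] pair_sum2[OF assms] by linarith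
  show ?thesis unfolding min_def using A B by auto
qed

definition "Spairs = {(i, j). i < j \<and> j < n}"

lemma finS: "finite Spairs"
  unfolding Spairs_def by (rule finite_subset[of _ "{..<n} \<times> {..<n}"]) auto

lemma Z_sum:
  "(\<Sum>f\<in>P. real (cm_Z n H f)) \<le> real (card P) *
     ((\<Sum>i<n. min (real (d i)) (real (d i)^2 / (real M - 1))) +
      (\<Sum>(i,j)\<in>Spairs. min (real (d i) * real (d j) / (real M - 1)) (real (d i)^2 * real (d j)^2 / ((real M - 1) * (real M - 3)))))"
proof -
  have "(\<Sum>f\<in>P. real (cm_Z n H f)) = (\<Sum>f\<in>P. (\<Sum>i<n. real (cm_X H f i i)) +
       (\<Sum>x\<in>Spairs. real ((\<lambda>(i,j). cm_X H f i j - (if cm_X H f i j > 0 then 1 else 0)) x)))"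
    by (simp add: cm_Z_def Spairs_def)
  also have "\<dots> = (\<Sum>i<n. \<Sum>f\<in>P. real (cm_X H f i i)) +
       (\<Sum>x\<in>Spairs. \<Sum>f\<in>P. real ((\<lambda>(i,j). cm_X H f i j - (if cm_X H f i j > 0 then 1 else 0)) x))"
    by (simp add: sum.distrib sum.swap[of _ P])
  also have "\<dots> \<le> (\<Sum>i<n. real (card P) * min (real (d i)) (real (d i)^2 / (real M - 1))) +
       (\<Sum>x\<in>Spairs. real (card P) * (\<lambda>(i,j). min (real (d i) * real (d j) / (real M - 1)) (real (d i)^2 * real (d j)^2 / ((real M - 1) * (real M - 3)))) x)"
  proof (intro add_mono sum_mono self_sum)
    fix x assume "x \<in> Spairs"
    then obtain i j where x: "x = (i,j)" "i \<noteq> j" unfolding Spairs_def by auto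
    show "(\<Sum>f\<in>P. real ((\<lambda>(i,j). cm_X H f i j - (if cm_X H f i j > 0 then 1 else 0)) x)) \<le>
       real (card P) * (\<lambda>(i,j). min (real (d i) * real (d j) / (real M - 1)) (real (d i)^2 * real (d j)^2 / ((real M - 1) * (real M - 3)))) x"
      unfolding x using pair_sum[OF x(2)] by simp
  qed
  also have "\<dots> = real (card P) *
     ((\<Sum>i<n. min (real (d i)) (real (d i)^2 / (real M - 1))) +
      (\<Sum>(i,j)\<in>Spairs. min (real (d i) * real (d j) / (real M - 1)) (real (d i)^2 * real (d j)^2 / ((real M - 1) * (real M - 3)))))"
    by (simp add: sum_distrib_left distrib_left case_prod_unfold)
  finally show ?thesis .
qed

end


lemma pw1:
  fixes d m s :: real
  assumes "0 \<le> d" "0 < m" "1 \<le> s" "s \<le> 2"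
  shows "min d (d^2 / m) \<le> d powr s * m powr (1 - s)"
proof (cases "d = 0")
  case True then show ?thesis by simp
next
  case False
  then have d: "d > 0" using assms by simp
  define t where "t = d / m"
  have t: "t > 0" using d assms by (simp add: t_def)
  have eq: "d powr s * m powr (1 - s) = d * t powr (s - 1)"
  proof -
    have "d powr s = d * d powr (s - 1)" using d powr_mult_base[of d "s-1"] by simp
    moreover have "m powr (1 - s) = 1 / m powr (s - 1)"
      using powr_minus_divide[of m "s - 1"] by simp
    moreover have "t powr (s - 1) = d powr (s - 1) / m powr (s - 1)"
      unfolding t_def by (rule powr_divide)
    ultimately show ?thesis by simp
  qed
  show ?thesis
  proof (cases "t \<le> 1")
    case True
    have "t powr 1 \<le> t powr (s - 1)" using True t assms by (intro powr_mono') auto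
    then have "t \<le> t powr (s - 1)" using t by simp
    then have "d * t \<le> d * t powr (s - 1)" using d by simp
    moreover have "d^2 / m = d * t" by (simp add: t_def power2_eq_square)
    ultimately show ?thesis using eq by simp
  next
    case False
    have "1 \<le> t powr (s - 1)" using False assms by (intro ge_one_powr_ge_zero) auto
    then have "d \<le> d * t powr (s - 1)" using d by simp
    then show ?thesis using eq by simp
  qed
qed

lemma pw2:
  fixes a s :: real
  assumes "0 \<le> a" "1 \<le> s" "s \<le> 2"
  shows "min a (2 * a^2) \<le> 2 * a powr s"
proof (cases "a = 0")
  case True then show ?thesis by simp
next
  case False
  then have a: "a > 0" using assms by simp
  show ?thesis
  proof (cases "a \<le> 1")
    case True
    have "a powr 2 \<le> a powr s" using True a assms by (intro powr_mono') auto
    then have "a^2 \<le> a powr s" using a by simp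
    then show ?thesis by simp
  next
    case False
    have "a powr 1 \<le> a powr s" using False assms by (intro powr_mono) auto
    then have "a \<le> a powr s" using a by simp
    moreover have "min a (2*a^2) \<le> a" by (rule min.cobounded1)
    ultimately show ?thesis using powr_ge_zero[of a s] by linarith
  qed
qed


context cmsetup begin

lemma cond_bound:
  fixes D :: "nat \<Rightarrow> nat" and s m0 :: real
  assumes dD: "\<And>i. d i \<le> D i + 1" and s: "1 \<le> s" "s \<le> 2" and m0: "0 < m0" "m0 \<le> real M - 1"
  shows "(\<Sum>f\<in>P. real (cm_Z n H f)) \<le> real (card P) *
     ((\<Sum>i<n. (real (D i) + 1) powr s * m0 powr (1 - s)) +
      (\<Sum>(i,j)\<in>Spairs. 2 * ((real (D i) + 1) * (real (D j) + 1)) powr s * m0 powr (- s)))"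
proof -
  have M1: "real M - 1 > 0" using m0 by simp
  have t1: "min (real (d i)) (real (d i)^2 / (real M - 1)) \<le> (real (D i) + 1) powr s * m0 powr (1 - s)" for i
  proof -
    have "min (real (d i)) (real (d i)^2 / (real M - 1)) \<le> real (d i) powr s * (real M - 1) powr (1 - s)"
      using M1 s by (intro pw1) auto
    also have "\<dots> \<le> (real (D i) + 1) powr s * m0 powr (1 - s)"
    proof (intro mult_mono)
      show "real (d i) powr s \<le> (real (D i) + 1) powr s"
        using dD[of i] s by (intro powr_mono2) auto
      show "(real M - 1) powr (1 - s) \<le> m0 powr (1 - s)"
        using s m0 by (intro powr_mono2') auto
    qed auto
    finally show ?thesis .
  qed
  have t2: "min (real (d i) * real (d j) / (real M - 1)) (real (d i)^2 * real (d j)^2 / ((real M - 1) * (real M - 3)))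
     \<le> 2 * ((real (D i) + 1) * (real (D j) + 1)) powr s * m0 powr (- s)" for i j
  proof -
    define a where "a = real (d i) * real (d j) / (real M - 1)"
    have a0: "a \<ge> 0" using M1 by (simp add: a_def)
    have b: "real (d i)^2 * real (d j)^2 / ((real M - 1) * (real M - 3)) \<le> 2 * a^2"
    proof -
      have "real (d i)^2 * real (d j)^2 / ((real M - 1) * (real M - 3)) =
            (real (d i) * real (d j))^2 * (1 / ((real M - 1) * (real M - 3)))"
        by (simp add: power_mult_distrib)
      also have "\<dots> \<le> (real (d i) * real (d j))^2 * (2 / ((real M - 1) * (real M - 1)))"
      proof (intro mult_left_mono)
        have M: "real M \<ge> 5" using M5 by simp
        have "(real M - 1) * (real M - 1) \<le> 2 * ((real M - 1) * (real M - 3))"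
          using M mult_nonneg_nonneg[of "real M - 1" "real M - 5"] by (simp add: algebra_simps)
        moreover have "0 < (2 * ((real M - 1) * (real M - 3))) * ((real M - 1) * (real M - 1))"
          using M by (intro mult_pos_pos) auto
        ultimately have "2 / (2 * ((real M - 1) * (real M - 3))) \<le> 2 / ((real M - 1) * (real M - 1))"
          by (intro divide_left_mono) auto
        then show "1 / ((real M - 1) * (real M - 3)) \<le> 2 / ((real M - 1) * (real M - 1))"
          by simp
      qed simp
      also have "\<dots> = 2 * a^2" by (simp add: a_def power2_eq_square)
      finally show ?thesis .
    qed
    have "min a (real (d i)^2 * real (d j)^2 / ((real M - 1) * (real M - 3))) \<le> min a (2 * a^2)"
      using b by (rule min.mono[OF order_refl])
    also have "\<dots> \<le> 2 * a powr s" using a0 s by (intro pw2) auto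
    also have "a powr s = (real (d i) * real (d j)) powr s * (real M - 1) powr (- s)"
      unfolding a_def powr_divide powr_minus_divide by simp
    also have "2 * \<dots> \<le> 2 * (((real (D i) + 1) * (real (D j) + 1)) powr s * m0 powr (- s))"
    proof (intro mult_left_mono mult_mono)
      show "(real (d i) * real (d j)) powr s \<le> ((real (D i) + 1) * (real (D j) + 1)) powr s"
        using dD[of i] dD[of j] s by (intro powr_mono2 mult_mono) auto
      show "(real M - 1) powr (- s) \<le> m0 powr (- s)"
        using s m0 by (intro powr_mono2') auto
    qed auto
    finally show ?thesis by (simp add: a_def mult.assoc)
  qed
  have "(\<Sum>f\<in>P. real (cm_Z n H f)) \<le> real (card P) *
     ((\<Sum>i<n. min (real (d i)) (real (d i)^2 / (real M - 1))) +
      (\<Sum>(i,j)\<in>Spairs. min (real (d i) * real (d j) / (real M - 1)) (real (d i)^2 * real (d j)^2 / ((real M - 1) * (real M - 3)))))"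
    by (rule Z_sum)
  also have "\<dots> \<le> real (card P) *
     ((\<Sum>i<n. (real (D i) + 1) powr s * m0 powr (1 - s)) +
      (\<Sum>(i,j)\<in>Spairs. 2 * ((real (D i) + 1) * (real (D j) + 1)) powr s * m0 powr (- s)))"
    by (intro mult_left_mono add_mono sum_mono t1) (auto simp: case_prod_unfold t2)
  finally show ?thesis .
qed

end

lemma cm_degrees_le: "cm_degrees n D i \<le> D i + 1"
  by (auto simp: cm_degrees_def)

lemma cm_degrees_ge: "D i \<le> cm_degrees n D i"
  by (auto simp: cm_degrees_def)

lemma cm_degrees_even: "even (\<Sum>i<n. cm_degrees n D i)"
proof (cases "odd (\<Sum>i<n. D i)")
  case True
  then obtain k where n: "n = Suc k" by (cases n) auto
  then have "(\<Sum>i<n. cm_degrees n D i) = (\<Sum>i<Suc k. (D(k := Suc (D k))) i)"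
    using True by (simp add: cm_degrees_def)
  also have "\<dots> = (\<Sum>i<n. D i) + 1" using n by simp
  finally have "(\<Sum>i<n. cm_degrees n D i) = (\<Sum>i<n. D i) + 1" .
  then show ?thesis using True by simp
next
  case False then show ?thesis by (simp add: cm_degrees_def)
qed


lemma tail_decay:
  fixes p :: "nat pmf" and L :: "real \<Rightarrow> real" and \<gamma> \<beta> :: real
  assumes sv: "slowly_varying L"
    and tail: "\<And>t. t > 0 \<Longrightarrow> measure_pmf.prob p {d. real d > t} = L t * t powr (- \<gamma>)"
    and b: "\<beta> < \<gamma>"
  shows "\<exists>x0\<ge>1. \<forall>k. measure_pmf.prob p {d. real d > 2^k * x0} \<le> (2 powr (- \<beta>))^k"
proof -
  define T where "T t = measure_pmf.prob p {d. real d > t}" for t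
  define r where "r = 2 powr (\<gamma> - \<beta>)"
  have r1: "1 < r" unfolding r_def using b powr_less_mono[of 0 "\<gamma> - \<beta>" 2] by simp
  have Lpos: "\<And>x. x > 0 \<Longrightarrow> L x > 0" using sv by (simp add: slowly_varying_def)
  have "((\<lambda>x. L (2 * x) / L x) \<longlongrightarrow> 1) at_top" using sv by (simp add: slowly_varying_def)
  then have "eventually (\<lambda>x. L (2 * x) / L x < r) at_top" using r1 by (rule order_tendstoD(2))
  then obtain N where N: "\<And>x. x \<ge> N \<Longrightarrow> L (2 * x) / L x < r" by (auto simp: eventually_at_top_linorder)
  define x0 where "x0 = max N 1"
  have x01: "x0 \<ge> 1" by (simp add: x0_def)
  have step: "T (2 * x) \<le> 2 powr (- \<beta>) * T x" if x: "x \<ge> x0" for x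
  proof -
    have xpos: "x > 0" using x x01 by simp
    have "L (2 * x) / L x < r" using N x by (simp add: x0_def)
    then have "L (2 * x) \<le> r * L x" using Lpos[OF xpos] by (simp add: divide_less_eq)
    moreover have "T (2 * x) = L (2 * x) * (2 * x) powr (- \<gamma>)"
      unfolding T_def using tail[of "2 * x"] xpos by simp
    ultimately have "T (2 * x) \<le> r * L x * (2 * x) powr (- \<gamma>)"
      by (simp add: mult_right_mono)
    also have "\<dots> = (r * 2 powr (- \<gamma>)) * (L x * x powr (- \<gamma>))"
      using xpos by (simp add: powr_mult)
    also have "r * 2 powr (- \<gamma>) = 2 powr (- \<beta>)"
      unfolding r_def by (simp add: powr_add[symmetric])
    also have "L x * x powr (- \<gamma>) = T x" unfolding T_def using tail[OF xpos] by simp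
    finally show ?thesis .
  qed
  have "T (2^k * x0) \<le> (2 powr (- \<beta>))^k" for k
  proof (induction k)
    case 0
    show ?case by (simp add: T_def)
  next
    case (Suc k)
    have ge: "2^k * x0 \<ge> x0" using x01 by simp
    have "T (2^Suc k * x0) = T (2 * (2^k * x0))" by (simp add: mult.assoc)
    also have "\<dots> \<le> 2 powr (- \<beta>) * T (2^k * x0)" using step[OF ge] .
    also have "\<dots> \<le> 2 powr (- \<beta>) * (2 powr (- \<beta>))^k" using Suc by (intro mult_left_mono) auto
    finally show ?case by simp
  qed
  then show ?thesis using x01 unfolding T_def by blast
qed

lemma dyadic_bound:
  fixes x0 y s :: real
  assumes x0: "x0 \<ge> 1" and y: "y \<ge> 0" and s: "s \<ge> 0"
  shows "ennreal ((y + 1) powr s) \<le> ennreal ((2 * x0) powr s) +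
     (\<Sum>k. ennreal ((2^(k+2) * x0) powr s) * indicator {z. z > 2^k * x0} y)"
proof (cases "y \<le> x0")
  case True
  have "(y + 1) powr s \<le> (2 * x0) powr s" using True x0 y s by (intro powr_mono2) auto
  then have "ennreal ((y + 1) powr s) \<le> ennreal ((2 * x0) powr s)" by (rule ennreal_leI)
  then show ?thesis by (rule order_trans[OF _ add_increasing2[OF zero_le order_refl]])
next
  case False
  obtain n0 where n0: "y < 2^n0" using real_arch_pow[of 2 y] by auto
  have ex: "\<exists>n. y \<le> 2^n * x0"
  proof
    have "(2::real)^n0 * 1 \<le> 2^n0 * x0" using x0 by (intro mult_left_mono) auto
    then show "y \<le> 2^n0 * x0" using n0 by linarith
  qed
  define n where "n = (LEAST n. y \<le> 2^n * x0)"
  have n1: "y \<le> 2^n * x0" unfolding n_def by (rule LeastI_ex[OF ex])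
  have n0': "n \<noteq> 0" using n1 False by (intro notI) simp
  then obtain k where k: "n = Suc k" by (cases n) auto
  have "k < n" using k by simp
  then have k1: "\<not> y \<le> 2^k * x0" unfolding n_def by (rule not_less_Least)
  have a: "y \<le> 2^(k+1) * x0" using n1 k by simp
  have "(1::real) \<le> 2^(k+1)" by (rule one_le_power) simp
  then have "(1::real) * 1 \<le> 2^(k+1) * x0" using x0 by (intro mult_mono) auto
  then have b: "1 \<le> 2^(k+1) * x0" by simp
  have c: "(2::real)^(k+2) * x0 = 2 * (2^(k+1) * x0)" by simp
  have yk: "y + 1 \<le> 2^(k+2) * x0" using a b c by linarith
  have ind: "indicator {z. z > 2^k * x0} y = (1::ennreal)" using k1 by (simp add: indicator_def)
  have "(y + 1) powr s \<le> (2^(k+2) * x0) powr s" using yk y s by (intro powr_mono2) auto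
  then have le: "ennreal ((y + 1) powr s) \<le> ennreal ((2^(k+2) * x0) powr s) * indicator {z. z > 2^k * x0} y"
    unfolding ind by (simp add: ennreal_leI)
  also have "\<dots> \<le> (\<Sum>k. ennreal ((2^(k+2) * x0) powr s) * indicator {z. z > 2^k * x0} y)"
  proof -
    define F where "F = (\<lambda>k. ennreal ((2^(k+2) * x0) powr s) * indicator {z. z > 2^k * x0} y)"
    have "sum F {k} \<le> suminf F" by (rule sum_le_suminf) auto
    moreover have "sum F {k} = F k" by simp
    ultimately have "F k \<le> suminf F" by simp
    then show ?thesis unfolding F_def .
  qed
  finally show ?thesis by (rule order_trans[OF _ add_increasing[OF zero_le order_refl]])
qed

lemma moment_finite:
  fixes p :: "nat pmf" and L :: "real \<Rightarrow> real" and \<gamma> s :: real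
  assumes sv: "slowly_varying L"
    and tail: "\<And>t. t > 0 \<Longrightarrow> measure_pmf.prob p {d. real d > t} = L t * t powr (- \<gamma>)"
    and s: "0 \<le> s" "s < \<gamma>"
  shows "(\<integral>\<^sup>+d. ennreal ((real d + 1) powr s) \<partial>p) < \<infinity>"
proof -
  define \<beta> where "\<beta> = (s + \<gamma>) / 2"
  have b: "\<beta> < \<gamma>" "s < \<beta>" using s by (auto simp: \<beta>_def)
  obtain x0 where x0: "x0 \<ge> 1" and T: "\<And>k. measure_pmf.prob p {d. real d > 2^k * x0} \<le> (2 powr (- \<beta>))^k"
    using tail_decay[OF sv tail b(1)] by blast
  define \<rho> where "\<rho> = 2 powr s * 2 powr (- \<beta>)"
  have \<rho>: "\<rho> = 2 powr (s - \<beta>)" by (simp add: \<rho>_def powr_add[symmetric])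
  have \<rho>1: "\<rho> < 1" "\<rho> \<ge> 0" unfolding \<rho> using b powr_less_mono[of "s - \<beta>" 0 2] by auto
  define K where "K = (4 * x0) powr s"
  have K: "K \<ge> 0" by (simp add: K_def)
  have ck: "(2^(k+2) * x0) powr s = K * (2 powr s)^k" for k
  proof -
    have "(2^(k+2) * x0) powr s = (4 * x0) powr s * (2^k) powr s"
      by (simp add: powr_mult power_add mult_ac)
    also have "(2::real)^k = 2 powr real k" by (simp add: powr_realpow)
    also have "(2 powr real k) powr s = (2 powr s)^k" by (simp add: powr_powr powr_power mult.commute)
    finally show ?thesis by (simp add: K_def)
  qed
  have "(\<integral>\<^sup>+d. ennreal ((real d + 1) powr s) \<partial>p) \<le>
        (\<integral>\<^sup>+d. ennreal ((2 * x0) powr s) +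
     (\<Sum>k. ennreal ((2^(k+2) * x0) powr s) * indicator {z. z > 2^k * x0} (real d)) \<partial>p)"
    using x0 s by (intro nn_integral_mono dyadic_bound) auto
  also have "\<dots> = ennreal ((2 * x0) powr s) + (\<Sum>k. \<integral>\<^sup>+d. ennreal ((2^(k+2) * x0) powr s) * indicator {z. z > 2^k * x0} (real d) \<partial>p)"
    by (simp add: nn_integral_add nn_integral_suminf measure_pmf.emeasure_space_1)
  also have "(\<Sum>k. \<integral>\<^sup>+d. ennreal ((2^(k+2) * x0) powr s) * indicator {z. z > 2^k * x0} (real d) \<partial>p) \<le>
      (\<Sum>k. ennreal (K * \<rho>^k))"
  proof (intro suminf_le allI summableI)
    fix k
    have ind: "indicator {z. z > 2^k * x0} (real d) = (indicator {d. real d > 2^k * x0} d :: ennreal)" for d :: nat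
      by (simp add: indicator_def)
    have "(\<integral>\<^sup>+d. ennreal ((2^(k+2) * x0) powr s) * indicator {z. z > 2^k * x0} (real d) \<partial>p) =
          ennreal ((2^(k+2) * x0) powr s) * emeasure p {d. real d > 2^k * x0}"
      by (simp add: ind nn_integral_cmult_indicator)
    also have "\<dots> = ennreal ((2^(k+2) * x0) powr s * measure_pmf.prob p {d. real d > 2^k * x0})"
      by (simp add: measure_pmf.emeasure_eq_measure ennreal_mult)
    also have "\<dots> \<le> ennreal (K * \<rho>^k)"
    proof (intro ennreal_leI)
      have "(2^(k+2) * x0) powr s * measure_pmf.prob p {d. real d > 2^k * x0} \<le> K * (2 powr s)^k * (2 powr (- \<beta>))^k"
        unfolding ck using T[of k] K by (intro mult_left_mono) auto
      also have "\<dots> = K * \<rho>^k" by (simp add: \<rho>_def power_mult_distrib)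
      finally show "(2^(k+2) * x0) powr s * measure_pmf.prob p {d. real d > 2^k * x0} \<le> K * \<rho>^k" .
    qed
    finally show "(\<integral>\<^sup>+d. ennreal ((2^(k+2) * x0) powr s) * indicator {z. z > 2^k * x0} (real d) \<partial>p) \<le> ennreal (K * \<rho>^k)" .
  qed
  also have "(\<Sum>k. ennreal (K * \<rho>^k)) = ennreal (\<Sum>k. K * \<rho>^k)"
    using K \<rho>1 by (intro suminf_ennreal2 summable_mult summable_geometric) auto
  finally show ?thesis by (simp add: add_mono_ennreal le_less_trans ennreal_add_less_top)
qed


lemma chernoff:
  fixes p :: "nat pmf" and q :: real and n :: nat
  assumes q: "measure_pmf.prob p {d. d \<noteq> 0} = q"
  defines "a \<equiv> q * (1 - exp (-1))"
  shows "measure_pmf.prob (Pi_pmf {..<n} 0 (\<lambda>_. p)) {D. real (\<Sum>i<n. D i) < a / 2 * real n}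
         \<le> exp (- (a / 2) * real n)"
proof -
  let ?Pi = "Pi_pmf {..<n} 0 (\<lambda>_. p)"
  let ?B = "{D. real (\<Sum>i<n. D i) < a / 2 * real n}"
  define \<phi> where "\<phi> v = exp (- min (real v) 1)" for v :: nat
  have q01: "0 \<le> q" "q \<le> 1" using q by auto
  have e1: "exp (-1::real) < 1" by simp
  have a01: "0 \<le> a" "a \<le> 1"
  proof -
    show "0 \<le> a" unfolding a_def using q01 e1 by simp
    have "a \<le> q * 1" unfolding a_def using q01 by (intro mult_left_mono) auto
    then show "a \<le> 1" using q01 by simp
  qed
  have pw: "indicator ?B D \<le> ennreal (exp (a / 2 * real n)) * (\<Prod>i<n. ennreal (\<phi> (D i)))" for D
  proof (cases "D \<in> ?B")
    case True
    have "(\<Sum>i<n. min (real (D i)) 1) \<le> (\<Sum>i<n. real (D i))" by (intro sum_mono) auto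
    also have "\<dots> < a / 2 * real n" using True by simp
    finally have lt: "(\<Sum>i<n. min (real (D i)) 1) < a / 2 * real n" .
    have "(\<Prod>i<n. \<phi> (D i)) = exp (\<Sum>i<n. - min (real (D i)) 1)"
      unfolding \<phi>_def by (rule exp_sum[symmetric]) simp
    also have "(\<Sum>i<n. - min (real (D i)) 1) = - (\<Sum>i<n. min (real (D i)) 1)"
      by (rule sum_negf)
    finally have pe: "(\<Prod>i<n. \<phi> (D i)) = exp (- (\<Sum>i<n. min (real (D i)) 1))" .
    have "exp (a / 2 * real n) * (\<Prod>i<n. \<phi> (D i)) = exp (a / 2 * real n - (\<Sum>i<n. min (real (D i)) 1))"
      unfolding pe by (simp only: exp_add[symmetric] diff_conv_add_uminus)
    also have "\<dots> \<ge> 1" using lt by simp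
    finally have "1 \<le> exp (a / 2 * real n) * (\<Prod>i<n. \<phi> (D i))" .
    then have "ennreal 1 \<le> ennreal (exp (a / 2 * real n) * (\<Prod>i<n. \<phi> (D i)))" by (rule ennreal_leI)
    also have "\<dots> = ennreal (exp (a / 2 * real n)) * ennreal (\<Prod>i<n. \<phi> (D i))"
      by (rule ennreal_mult) (auto simp: \<phi>_def intro: prod_nonneg)
    also have "ennreal (\<Prod>i<n. \<phi> (D i)) = (\<Prod>i<n. ennreal (\<phi> (D i)))"
      by (rule prod_ennreal[symmetric]) (simp add: \<phi>_def)
    finally show ?thesis using True by simp
  qed simp
  have int\<phi>: "(\<integral>\<^sup>+v. ennreal (\<phi> v) \<partial>p) = ennreal (1 - a)"
  proof -
    have "(\<lambda>v. ennreal (\<phi> v)) = (\<lambda>v. indicator {0} v + ennreal (exp (-1)) * indicator {d. d \<noteq> 0} v)"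
      by (auto simp: \<phi>_def fun_eq_iff indicator_def)
    then have "(\<integral>\<^sup>+v. ennreal (\<phi> v) \<partial>p) = emeasure p {0} + ennreal (exp (-1)) * emeasure p {d. d \<noteq> 0}"
      by (simp add: nn_integral_add nn_integral_cmult)
    also have "emeasure p {d. d \<noteq> 0} = ennreal q" using q by (simp add: measure_pmf.emeasure_eq_measure)
    also have "emeasure p {0} = ennreal (1 - q)"
    proof -
      have "{0::nat} = space (measure_pmf p) - {d. d \<noteq> 0}" by auto
      then have "measure_pmf.prob p {0} = 1 - q"
        using measure_pmf.prob_compl[of "{d. d \<noteq> 0}" p] q by simp
      then show ?thesis by (simp add: measure_pmf.emeasure_eq_measure)
    qed
    also have "ennreal (1 - q) + ennreal (exp (-1)) * ennreal q = ennreal (1 - q + exp (-1) * q)"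
      using q01 by (simp add: ennreal_mult ennreal_plus[symmetric])
    also have "1 - q + exp (-1) * q = 1 - a" by (simp add: a_def algebra_simps)
    finally show ?thesis .
  qed
  have "emeasure ?Pi ?B = (\<integral>\<^sup>+D. indicator ?B D \<partial>?Pi)" by simp
  also have "\<dots> \<le> (\<integral>\<^sup>+D. ennreal (exp (a / 2 * real n)) * (\<Prod>i<n. ennreal (\<phi> (D i))) \<partial>?Pi)"
    by (intro nn_integral_mono pw)
  also have "\<dots> = ennreal (exp (a / 2 * real n)) * (\<integral>\<^sup>+D. (\<Prod>i<n. ennreal (\<phi> (D i))) \<partial>?Pi)"
    by (simp add: nn_integral_cmult)
  also have "(\<integral>\<^sup>+D. (\<Prod>i<n. ennreal (\<phi> (D i))) \<partial>?Pi) = (\<Prod>i<n. \<integral>\<^sup>+v. ennreal (\<phi> v) \<partial>p)"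
    by (rule nn_integral_prod_Pi_pmf[where f = "\<lambda>_ v. ennreal (\<phi> v)"]) simp
  also have "\<dots> = ennreal ((1 - a)^n)" using a01 by (simp add: int\<phi> ennreal_power)
  also have "ennreal (exp (a / 2 * real n)) * ennreal ((1 - a)^n) = ennreal (exp (a / 2 * real n) * (1 - a)^n)"
    by (rule ennreal_mult[symmetric]) (use a01 in auto)
  also have "exp (a / 2 * real n) * (1 - a)^n \<le> exp (- (a / 2) * real n)"
  proof -
    have "(1 - a)^n \<le> (exp (- a))^n" using a01 exp_ge_add_one_self[of "- a"] by (intro power_mono) auto
    also have "\<dots> = exp (- a * real n)" by (subst exp_of_nat_mult[symmetric]) (simp add: mult.commute)
    finally have "exp (a / 2 * real n) * (1 - a)^n \<le> exp (a / 2 * real n) * exp (- a * real n)"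
      by (intro mult_left_mono) auto
    also have "\<dots> = exp (- (a / 2) * real n)" by (simp add: exp_add[symmetric] algebra_simps)
    finally show ?thesis .
  qed
  finally have "emeasure ?Pi ?B \<le> ennreal (exp (- (a / 2) * real n))" by (simp add: ennreal_leI)
  then show ?thesis by (simp add: measure_pmf.emeasure_eq_measure)
qed


lemma prod_two:
  fixes F :: "nat \<Rightarrow> 'a::comm_monoid_mult"
  assumes "i < n" "j < n" "i \<noteq> j"
  shows "(\<Prod>x<n. if x = i \<or> x = j then F x else 1) = F i * F j"
proof -
  have "(\<Prod>x<n. if x = i \<or> x = j then F x else 1) = (\<Prod>x\<in>{x\<in>{..<n}. x = i \<or> x = j}. F x)"
    by (rule prod.inter_filter[symmetric]) simp
  also have "{x\<in>{..<n}. x = i \<or> x = j} = {i, j}" using assms by auto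
  finally show ?thesis using assms by simp
qed

lemma Pi_single:
  fixes i n :: nat
  assumes "i < n"
  shows "(\<integral>\<^sup>+D. h (D i) \<partial>Pi_pmf {..<n} 0 (\<lambda>_. p)) = (\<integral>\<^sup>+v. h v \<partial>p)"
proof -
  have "(\<integral>\<^sup>+D. h (D i) \<partial>Pi_pmf {..<n} 0 (\<lambda>_. p)) = (\<integral>\<^sup>+v. h v \<partial>map_pmf (\<lambda>D. D i) (Pi_pmf {..<n} 0 (\<lambda>_. p)))"
    by simp
  also have "map_pmf (\<lambda>D. D i) (Pi_pmf {..<n} 0 (\<lambda>_. p)) = p"
    using assms by (subst Pi_pmf_component) auto
  finally show ?thesis .
qed

lemma Pi_pair:
  fixes h :: "'a \<Rightarrow> ennreal" and i j n :: nat
  assumes "i < n" "j < n" "i \<noteq> j"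
  shows "(\<integral>\<^sup>+D. h (D i) * h (D j) \<partial>Pi_pmf {..<n} dflt (\<lambda>_. p)) = (\<integral>\<^sup>+v. h v \<partial>p) * (\<integral>\<^sup>+v. h v \<partial>p)"
proof -
  define F where "F x v = (if x = i \<or> x = j then h v else 1)" for x v
  have "(\<integral>\<^sup>+D. h (D i) * h (D j) \<partial>Pi_pmf {..<n} dflt (\<lambda>_. p)) =
        (\<integral>\<^sup>+D. (\<Prod>x<n. F x (D x)) \<partial>Pi_pmf {..<n} dflt (\<lambda>_. p))"
  proof (intro nn_integral_cong)
    fix D :: "nat \<Rightarrow> 'a"
    show "h (D i) * h (D j) = (\<Prod>x<n. F x (D x))"
      unfolding F_def using prod_two[OF assms, of "\<lambda>x. h (D x)"] by simp
  qed
  also have "\<dots> = (\<Prod>x<n. \<integral>\<^sup>+v. F x v \<partial>p)"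
    by (rule nn_integral_prod_Pi_pmf) simp
  also have "\<dots> = (\<Prod>x<n. if x = i \<or> x = j then (\<integral>\<^sup>+v. h v \<partial>p) else 1)"
    by (intro prod.cong refl) (simp add: F_def measure_pmf.emeasure_space_1)
  also have "\<dots> = (\<integral>\<^sup>+v. h v \<partial>p) * (\<integral>\<^sup>+v. h v \<partial>p)"
    by (rule prod_two[OF assms])
  finally show ?thesis .
qed

definition Wf :: "nat \<Rightarrow> real \<Rightarrow> real \<Rightarrow> (nat \<Rightarrow> nat) \<Rightarrow> real" where
  "Wf n s m0 D = (\<Sum>i<n. (real (D i) + 1) powr s * m0 powr (1 - s)) +
      (\<Sum>(i,j)\<in>{(i, j). i < j \<and> j < n}. 2 * ((real (D i) + 1) * (real (D j) + 1)) powr s * m0 powr (- s))"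

lemma card_pairs_le: "card {(i, j). i < j \<and> j < (n::nat)} \<le> n * n"
proof -
  have "card {(i, j). i < j \<and> j < (n::nat)} \<le> card ({..<n} \<times> {..<n})"
    by (intro card_mono) auto
  then show ?thesis by (simp add: card_cartesian_product)
qed

lemma W_integral:
  fixes p :: "nat pmf" and s m0 \<mu> :: real
  assumes \<mu>: "(\<integral>\<^sup>+v. ennreal ((real v + 1) powr s) \<partial>p) = ennreal \<mu>" "\<mu> \<ge> 0"
  shows "(\<integral>\<^sup>+D. ennreal (Wf n s m0 D) \<partial>Pi_pmf {..<n} 0 (\<lambda>_. p)) \<le>
     ennreal (real n * \<mu> * m0 powr (1 - s) + real n * real n * (2 * \<mu> * \<mu> * m0 powr (- s)))"
proof -
  let ?Pi = "Pi_pmf {..<n} 0 (\<lambda>_. p)"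
  let ?S = "{(i, j). i < j \<and> j < (n::nat)}"
  have finS: "finite ?S" by (rule finite_subset[of _ "{..<n} \<times> {..<n}"]) auto
  define g where "g v = (real v + 1) powr s" for v :: nat
  have Weq: "(\<lambda>D. ennreal (Wf n s m0 D)) = (\<lambda>D. (\<Sum>i<n. ennreal (g (D i) * m0 powr (1 - s))) +
      (\<Sum>x\<in>?S. ennreal (2 * m0 powr (- s)) * (ennreal (g (D (fst x))) * ennreal (g (D (snd x))))))"
  proof
    fix D
    have gnn: "g v \<ge> 0" for v by (simp add: g_def)
    have e1: "Wf n s m0 D = (\<Sum>i<n. g (D i) * m0 powr (1 - s)) +
       (\<Sum>x\<in>?S. 2 * m0 powr (- s) * (g (D (fst x)) * g (D (snd x))))"
      unfolding Wf_def g_def by (simp add: case_prod_unfold powr_mult mult_ac)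
    have n1: "(\<Sum>i<n. g (D i) * m0 powr (1 - s)) \<ge> 0" by (intro sum_nonneg mult_nonneg_nonneg gnn) simp
    have n2: "(\<Sum>x\<in>?S. 2 * m0 powr (- s) * (g (D (fst x)) * g (D (snd x)))) \<ge> 0"
      by (intro sum_nonneg mult_nonneg_nonneg gnn) auto
    have "ennreal (Wf n s m0 D) = ennreal (\<Sum>i<n. g (D i) * m0 powr (1 - s)) +
       ennreal (\<Sum>x\<in>?S. 2 * m0 powr (- s) * (g (D (fst x)) * g (D (snd x))))"
      unfolding e1 using n1 n2 by (rule ennreal_plus)
    also have "ennreal (\<Sum>i<n. g (D i) * m0 powr (1 - s)) = (\<Sum>i<n. ennreal (g (D i) * m0 powr (1 - s)))"
      by (rule sum_ennreal[symmetric]) (intro mult_nonneg_nonneg gnn, simp)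
    also have "ennreal (\<Sum>x\<in>?S. 2 * m0 powr (- s) * (g (D (fst x)) * g (D (snd x)))) =
        (\<Sum>x\<in>?S. ennreal (2 * m0 powr (- s) * (g (D (fst x)) * g (D (snd x)))))"
      by (rule sum_ennreal[symmetric]) (intro mult_nonneg_nonneg gnn, auto)
    also have "(\<Sum>x\<in>?S. ennreal (2 * m0 powr (- s) * (g (D (fst x)) * g (D (snd x))))) =
        (\<Sum>x\<in>?S. ennreal (2 * m0 powr (- s)) * (ennreal (g (D (fst x))) * ennreal (g (D (snd x)))))"
      by (intro sum.cong refl) (simp add: ennreal_mult gnn)
    finally show "ennreal (Wf n s m0 D) = (\<Sum>i<n. ennreal (g (D i) * m0 powr (1 - s))) +
      (\<Sum>x\<in>?S. ennreal (2 * m0 powr (- s)) * (ennreal (g (D (fst x))) * ennreal (g (D (snd x)))))" .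
  qed
  then have "(\<integral>\<^sup>+D. ennreal (Wf n s m0 D) \<partial>?Pi) =
     (\<Sum>i<n. \<integral>\<^sup>+D. ennreal (g (D i) * m0 powr (1 - s)) \<partial>?Pi) +
     (\<Sum>x\<in>?S. ennreal (2 * m0 powr (- s)) * \<integral>\<^sup>+D. ennreal (g (D (fst x))) * ennreal (g (D (snd x))) \<partial>?Pi)"
  proof -
    have "(\<integral>\<^sup>+D. ennreal (Wf n s m0 D) \<partial>?Pi) = (\<integral>\<^sup>+D. (\<Sum>i<n. ennreal (g (D i) * m0 powr (1 - s))) +
      (\<Sum>x\<in>?S. ennreal (2 * m0 powr (- s)) * (ennreal (g (D (fst x))) * ennreal (g (D (snd x))))) \<partial>?Pi)"
      by (simp only: Weq)
    also have "\<dots> = (\<integral>\<^sup>+D. (\<Sum>i<n. ennreal (g (D i) * m0 powr (1 - s))) \<partial>?Pi) +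
      (\<integral>\<^sup>+D. (\<Sum>x\<in>?S. ennreal (2 * m0 powr (- s)) * (ennreal (g (D (fst x))) * ennreal (g (D (snd x))))) \<partial>?Pi)"
      by (rule nn_integral_add) simp_all
    also have "(\<integral>\<^sup>+D. (\<Sum>i<n. ennreal (g (D i) * m0 powr (1 - s))) \<partial>?Pi) =
        (\<Sum>i<n. \<integral>\<^sup>+D. ennreal (g (D i) * m0 powr (1 - s)) \<partial>?Pi)"
      by (rule nn_integral_sum) simp
    also have "(\<integral>\<^sup>+D. (\<Sum>x\<in>?S. ennreal (2 * m0 powr (- s)) * (ennreal (g (D (fst x))) * ennreal (g (D (snd x))))) \<partial>?Pi) =
        (\<Sum>x\<in>?S. \<integral>\<^sup>+D. ennreal (2 * m0 powr (- s)) * (ennreal (g (D (fst x))) * ennreal (g (D (snd x)))) \<partial>?Pi)"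
      by (rule nn_integral_sum) simp
    also have "\<dots> = (\<Sum>x\<in>?S. ennreal (2 * m0 powr (- s)) * \<integral>\<^sup>+D. ennreal (g (D (fst x))) * ennreal (g (D (snd x))) \<partial>?Pi)"
      by (intro sum.cong refl nn_integral_cmult) simp
    finally show ?thesis .
  qed
  also have "(\<Sum>i<n. \<integral>\<^sup>+D. ennreal (g (D i) * m0 powr (1 - s)) \<partial>?Pi) = (\<Sum>i<n. ennreal (\<mu> * m0 powr (1 - s)))"
  proof (intro sum.cong refl)
    fix i assume i: "i \<in> {..<n}"
    have "(\<integral>\<^sup>+D. ennreal (g (D i) * m0 powr (1 - s)) \<partial>?Pi) = (\<integral>\<^sup>+v. ennreal (g v * m0 powr (1 - s)) \<partial>p)"
      using i by (intro Pi_single) simp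
    also have "\<dots> = (\<integral>\<^sup>+v. ennreal (g v) * ennreal (m0 powr (1 - s)) \<partial>p)"
      by (intro nn_integral_cong ennreal_mult) (simp_all add: g_def)
    also have "\<dots> = (\<integral>\<^sup>+v. ennreal (g v) \<partial>p) * ennreal (m0 powr (1 - s))"
      by (rule nn_integral_multc) simp
    also have "\<dots> = ennreal \<mu> * ennreal (m0 powr (1 - s))"
      using \<mu>(1) by (simp only: g_def)
    also have "\<dots> = ennreal (\<mu> * m0 powr (1 - s))" using \<mu> by (simp add: ennreal_mult)
    finally show "(\<integral>\<^sup>+D. ennreal (g (D i) * m0 powr (1 - s)) \<partial>?Pi) = ennreal (\<mu> * m0 powr (1 - s))" .
  qed
  also have "(\<Sum>x\<in>?S. ennreal (2 * m0 powr (- s)) * \<integral>\<^sup>+D. ennreal (g (D (fst x))) * ennreal (g (D (snd x))) \<partial>?Pi)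
      = (\<Sum>x\<in>?S. ennreal (2 * \<mu> * \<mu> * m0 powr (- s)))"
  proof (intro sum.cong refl)
    fix x assume x: "x \<in> ?S"
    have "(\<integral>\<^sup>+D. ennreal (g (D (fst x))) * ennreal (g (D (snd x))) \<partial>?Pi) = ennreal \<mu> * ennreal \<mu>"
      using x Pi_pair[where i="fst x" and n=n and j="snd x" and h="\<lambda>v. ennreal (g v)" and dflt=0 and p=p] \<mu> by (auto simp: g_def)
    then show "ennreal (2 * m0 powr (- s)) * (\<integral>\<^sup>+D. ennreal (g (D (fst x))) * ennreal (g (D (snd x))) \<partial>?Pi)
      = ennreal (2 * \<mu> * \<mu> * m0 powr (- s))"
      using \<mu> by (simp add: ennreal_mult[symmetric] mult_ac)
  qed
  also have "(\<Sum>i<n. ennreal (\<mu> * m0 powr (1 - s))) + (\<Sum>x\<in>?S. ennreal (2 * \<mu> * \<mu> * m0 powr (- s)))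
     = ennreal (real n * (\<mu> * m0 powr (1 - s)) + real (card ?S) * (2 * \<mu> * \<mu> * m0 powr (- s)))"
  proof -
    have "(\<Sum>i<n. ennreal (\<mu> * m0 powr (1 - s))) = ennreal (\<Sum>i<n. \<mu> * m0 powr (1 - s))"
      using \<mu> by (intro sum_ennreal) simp
    moreover have "(\<Sum>x\<in>?S. ennreal (2 * \<mu> * \<mu> * m0 powr (- s))) = ennreal (\<Sum>x\<in>?S. 2 * \<mu> * \<mu> * m0 powr (- s))"
      using \<mu> by (intro sum_ennreal) simp
    moreover have "0 \<le> (\<Sum>i<n. \<mu> * m0 powr (1 - s))" "0 \<le> (\<Sum>x\<in>?S. 2 * \<mu> * \<mu> * m0 powr (- s))"
      using \<mu> by (intro sum_nonneg; simp)+
    ultimately show ?thesis by (simp add: ennreal_plus[symmetric] del: ennreal_plus)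
  qed
  also have "\<dots> \<le> ennreal (real n * \<mu> * m0 powr (1 - s) + real n * real n * (2 * \<mu> * \<mu> * m0 powr (- s)))"
  proof (intro ennreal_leI add_mono mult_right_mono)
    show "real (card ?S) \<le> real n * real n" using card_pairs_le[of n] by (metis of_nat_le_iff of_nat_mult)
  qed (use \<mu> in auto)
  finally show ?thesis .
qed


lemma inner_bound:
  fixes n :: nat and D :: "nat \<Rightarrow> nat" and s m0 t :: real
  assumes good: "real (\<Sum>i<n. D i) \<ge> 2 * m0" and m0: "m0 \<ge> 6" and s: "1 \<le> s" "s \<le> 2" and t: "t > 0"
  shows "emeasure (map_pmf (cm_Z n (half_edges n (cm_degrees n D))) (pmf_of_set (pairings (half_edges n (cm_degrees n D)))))
           {z. real z > t} \<le> ennreal (Wf n s m0 D / t)"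
proof -
  define d where "d = cm_degrees n D"
  define HH where "HH = half_edges n d"
  define PP where "PP = pairings HH"
  have M: "card HH = (\<Sum>i<n. d i)" unfolding HH_def by (rule card_he)
  have "(\<Sum>i<n. D i) \<le> (\<Sum>i<n. d i)" unfolding d_def by (intro sum_mono cm_degrees_ge)
  then have Mge: "real (card HH) \<ge> 2 * m0" using good M by linarith
  have M5: "card HH \<ge> 5" using Mge m0 by linarith
  have ev: "even (card HH)" using M cm_degrees_even[of n D] by (simp add: d_def)
  have PPne: "PP \<noteq> {}" unfolding PP_def HH_def using pairings_nonempty[OF he_finite] ev by (simp add: HH_def)
  have finPP: "finite PP" unfolding PP_def HH_def by (rule pairings_finite[OF he_finite])
  interpret cmsetup n d
    by unfold_locales (use M5 PPne in \<open>simp_all add: HH_def PP_def\<close>)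
  have Sp: "Spairs = {(i, j). i < j \<and> j < n}" by (simp add: Spairs_def)
  have cb: "(\<Sum>f\<in>PP. real (cm_Z n HH f)) \<le> real (card PP) * Wf n s m0 D"
    unfolding PP_def HH_def Wf_def Sp[symmetric]
    by (rule cond_bound) (use s m0 Mge cm_degrees_le[of n D] in \<open>auto simp: d_def HH_def\<close>)
  let ?B = "{f\<in>PP. real (cm_Z n HH f) > t}"
  have "real (card ?B) * t = (\<Sum>f\<in>?B. t)" by simp
  also have "\<dots> \<le> (\<Sum>f\<in>?B. real (cm_Z n HH f))" by (intro sum_mono) auto
  also have "\<dots> \<le> (\<Sum>f\<in>PP. real (cm_Z n HH f))" using finPP by (intro sum_mono2) auto
  finally have "real (card ?B) * t \<le> real (card PP) * Wf n s m0 D" using cb by linarith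
  moreover have cP: "real (card PP) > 0" using finPP PPne by (simp add: card_gt_0_iff)
  ultimately have le: "real (card ?B) / real (card PP) \<le> Wf n s m0 D / t"
  proof -
    assume A: "real (card ?B) * t \<le> real (card PP) * Wf n s m0 D" and cP: "real (card PP) > 0"
    have "real (card ?B) / real (card PP) = (real (card ?B) * t) / (real (card PP) * t)"
      using t by simp
    also have "\<dots> \<le> (real (card PP) * Wf n s m0 D) / (real (card PP) * t)"
      using A cP t by (intro divide_right_mono) auto
    also have "\<dots> = Wf n s m0 D / t" using cP by simp
    finally show ?thesis .
  qed
  have fin2: "measure (pmf_of_set PP) (cm_Z n HH -` {z. real z > t}) = real (card (PP \<inter> cm_Z n HH -` {z. real z > t})) / real (card PP)"
    by (rule measure_pmf_of_set[OF PPne finPP])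
  have seteq: "PP \<inter> cm_Z n HH -` {z. real z > t} = ?B" by auto
  have "emeasure (map_pmf (cm_Z n HH) (pmf_of_set PP)) {z. real z > t} = emeasure (pmf_of_set PP) (cm_Z n HH -` {z. real z > t})"
    by (rule emeasure_map_pmf)
  also have "\<dots> = ennreal (measure (pmf_of_set PP) (cm_Z n HH -` {z. real z > t}))"
    by (rule measure_pmf.emeasure_eq_measure)
  also have "\<dots> = ennreal (real (card ?B) / real (card PP))" by (simp only: fin2 seteq)
  also have "\<dots> \<le> ennreal (Wf n s m0 D / t)" using le by (rule ennreal_leI)
  finally have fin: "emeasure (map_pmf (cm_Z n HH) (pmf_of_set PP)) {z. real z > t} \<le> ennreal (Wf n s m0 D / t)" .
  show ?thesis using fin by (simp only: PP_def HH_def d_def)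
qed


theorem theorem2p1:
  fixes p :: "nat pmf" and L :: "real \<Rightarrow> real" and \<gamma> :: real
  assumes "slowly_varying L"
    and "\<And>t. t > 0 \<Longrightarrow> measure_pmf.prob p {d. real d > t} = L t * t powr (- \<gamma>)"
    and "1 < \<gamma>" and "\<gamma> < 2"
  shows "\<forall>\<delta>>0. \<forall>\<epsilon>>0.
    ((\<lambda>n. measure_pmf.prob (Z_distr p n)
        {z. \<bar>real z / real n powr (2 - \<gamma> + \<delta>)\<bar> > \<epsilon>}) \<longlongrightarrow> 0) sequentially"
proof (intro allI impI)
  fix \<delta> \<epsilon> :: real
  assume \<delta>: "\<delta> > 0" and \<epsilon>: "\<epsilon> > 0"
  define s0 where "s0 = max 1 (\<gamma> - \<delta>)"
  define s where "s = (s0 + \<gamma>) / 2"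
  define r where "r = 2 - \<gamma> + \<delta>"
  have s0: "1 \<le> s0" "\<gamma> - \<delta> \<le> s0" "s0 < \<gamma>" using assms(3) \<delta> by (auto simp: s0_def)
  have s1: "1 \<le> s" "s < \<gamma>" "s \<le> 2" "2 - s < r" "0 \<le> s"
  proof -
    show "1 \<le> s" using s0 assms(3,4) \<delta> unfolding s_def r_def by (simp add: field_simps)
    show "s < \<gamma>" using s0 assms(3,4) \<delta> unfolding s_def r_def by (simp add: field_simps)
    show "s \<le> 2" using s0 assms(3,4) \<delta> unfolding s_def r_def by (simp add: field_simps)
    show "2 - s < r" using s0 assms(3,4) \<delta> unfolding s_def r_def by (simp add: field_simps)
    show "0 \<le> s" using s0 assms(3,4) \<delta> unfolding s_def r_def by (simp add: field_simps)
  qed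
  have "(\<integral>\<^sup>+v. ennreal ((real v + 1) powr s) \<partial>p) < \<infinity>"
    using moment_finite[OF assms(1) assms(2), of s] s1 by auto
  then obtain \<mu> where \<mu>: "(\<integral>\<^sup>+v. ennreal ((real v + 1) powr s) \<partial>p) = ennreal \<mu>" "\<mu> \<ge> 0"
    by (auto simp: less_top_ennreal)
  define q where "q = measure_pmf.prob p {d. d \<noteq> 0}"
  have qpos: "q > 0"
  proof -
    have "{d::nat. d \<noteq> 0} = {d. real d > 1/2}" by auto
    then have "q = L (1/2) * (1/2) powr (- \<gamma>)" unfolding q_def using assms(2)[of "1/2"] by simp
    moreover have "L (1/2) > 0" using assms(1) by (simp add: slowly_varying_def)
    ultimately show ?thesis by simp
  qed
  define a where "a = q * (1 - exp (-1))"
  have apos: "a > 0" unfolding a_def using qpos by simp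
  define c where "c = a / 2"
  have cpos: "c > 0" using apos by (simp add: c_def)
  define K where "K = \<mu> * (c/2) powr (1 - s) + 2 * \<mu> * \<mu> * (c/2) powr (- s)"
  define bnd where "bnd n = exp (- c * real n) + K * real n powr (2 - s) / (\<epsilon> * real n powr r)" for n :: nat
  have main: "measure_pmf.prob (Z_distr p n) {z. \<bar>real z / real n powr (2 - \<gamma> + \<delta>)\<bar> > \<epsilon>} \<le> bnd n"
    if n: "c * real n \<ge> 12" for n
  proof -
    have npos: "real n > 0" using n cpos by (cases "n = 0") auto
    define t where "t = \<epsilon> * real n powr r"
    have tpos: "t > 0" using \<epsilon> npos by (simp add: t_def)
    define m0 where "m0 = c * real n / 2"
    have m0: "m0 \<ge> 6" using n by (simp add: m0_def)
    have Aeq: "{z. \<bar>real z / real n powr (2 - \<gamma> + \<delta>)\<bar> > \<epsilon>} = {z::nat. real z > t}"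
    proof -
      have "\<bar>real z / real n powr r\<bar> > \<epsilon> \<longleftrightarrow> real z > t" for z :: nat
        using npos by (simp add: t_def pos_less_divide_eq mult.commute)
      then show ?thesis by (simp add: r_def)
    qed
    define Bad where "Bad = {D. real (\<Sum>i<n. D i) < a / 2 * real n}"
    let ?Pi = "Pi_pmf {..<n} 0 (\<lambda>_. p)"
    let ?inner = "\<lambda>D. map_pmf (cm_Z n (half_edges n (cm_degrees n D))) (pmf_of_set (pairings (half_edges n (cm_degrees n D))))"
    have pw: "emeasure (?inner D) {z. real z > t} \<le> indicator Bad D + ennreal (Wf n s m0 D / t)" for D
    proof (cases "D \<in> Bad")
      case True
      have "emeasure (?inner D) {z. real z > t} \<le> 1"
        by (simp add: measure_pmf.emeasure_eq_measure)
      also have "1 = (indicator Bad D :: ennreal)" using True by simp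
      finally show ?thesis by (rule order_trans[OF _ add_increasing2[OF zero_le order_refl]])
    next
      case False
      then have good: "real (\<Sum>i<n. D i) \<ge> 2 * m0" by (simp add: Bad_def m0_def c_def)
      have "emeasure (?inner D) {z. real z > t} \<le> ennreal (Wf n s m0 D / t)"
        by (rule inner_bound[OF good m0 s1(1) s1(3) tpos])
      then show ?thesis by (rule order_trans[OF _ add_increasing[OF zero_le order_refl]])
    qed
    have Zeq: "emeasure (Z_distr p n) {z. real z > t} = (\<integral>\<^sup>+D. emeasure (?inner D) {z. real z > t} \<partial>?Pi)"
      unfolding Z_distr_def by (simp add: Let_def)
    also have "\<dots> \<le> (\<integral>\<^sup>+D. indicator Bad D + ennreal (Wf n s m0 D / t) \<partial>?Pi)"
      by (intro nn_integral_mono pw)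
    also have "\<dots> = emeasure ?Pi Bad + (\<integral>\<^sup>+D. ennreal (Wf n s m0 D / t) \<partial>?Pi)"
      by (subst nn_integral_add) simp_all
    also have "emeasure ?Pi Bad \<le> ennreal (exp (- c * real n))"
    proof -
      have "measure_pmf.prob ?Pi Bad \<le> exp (- (a / 2) * real n)"
        unfolding Bad_def a_def by (rule chernoff) (simp add: q_def)
      then show ?thesis by (simp add: measure_pmf.emeasure_eq_measure c_def ennreal_leI)
    qed
    also have "(\<integral>\<^sup>+D. ennreal (Wf n s m0 D / t) \<partial>?Pi) \<le> ennreal (K * real n powr (2 - s) / t)"
    proof -
      have Wnn: "Wf n s m0 D \<ge> 0" for D
        unfolding Wf_def using m0 by (intro add_nonneg_nonneg sum_nonneg) (auto simp: case_prod_unfold)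
      have "(\<integral>\<^sup>+D. ennreal (Wf n s m0 D / t) \<partial>?Pi) = (\<integral>\<^sup>+D. ennreal (Wf n s m0 D) * ennreal (1 / t) \<partial>?Pi)"
        using tpos by (intro nn_integral_cong) (simp add: ennreal_mult'' divide_inverse)
      also have "\<dots> = (\<integral>\<^sup>+D. ennreal (Wf n s m0 D) \<partial>?Pi) * ennreal (1 / t)"
        by (rule nn_integral_multc) simp
      also have "\<dots> \<le> ennreal (real n * \<mu> * m0 powr (1 - s) + real n * real n * (2 * \<mu> * \<mu> * m0 powr (- s))) * ennreal (1 / t)"
        by (intro mult_right_mono W_integral[OF \<mu>]) simp
      also have "real n * \<mu> * m0 powr (1 - s) + real n * real n * (2 * \<mu> * \<mu> * m0 powr (- s)) = K * real n powr (2 - s)"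
      proof -
        have m0eq: "m0 = (c/2) * real n" by (simp add: m0_def)
        have pm: "m0 powr x = (c/2) powr x * real n powr x" for x
          unfolding m0eq by (rule powr_mult)
        have e1: "real n * real n powr (1 - s) = real n powr (2 - s)"
          using npos powr_mult_base[of "real n" "1 - s"] by simp
        have e2: "real n * real n * real n powr (- s) = real n powr (2 - s)"
          using npos powr_mult_base[of "real n" "- s"] e1 by (simp add: mult.assoc)
        have A: "real n * \<mu> * m0 powr (1 - s) = \<mu> * (c/2) powr (1 - s) * real n powr (2 - s)"
          unfolding pm e1[symmetric] by (simp add: mult_ac)
        have B: "real n * real n * (2 * \<mu> * \<mu> * m0 powr (- s)) = 2 * \<mu> * \<mu> * (c/2) powr (- s) * real n powr (2 - s)"
          unfolding pm e2[symmetric] by (simp add: mult_ac)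
        show ?thesis unfolding A B K_def by (simp add: algebra_simps)
      qed
      also have "ennreal (K * real n powr (2 - s)) * ennreal (1 / t) = ennreal (K * real n powr (2 - s) / t)"
        using tpos by (simp add: ennreal_mult'' divide_inverse)
      finally show ?thesis .
    qed
    finally have E: "emeasure (Z_distr p n) {z. real z > t} \<le> ennreal (exp (- c * real n)) + ennreal (K * real n powr (2 - s) / t)"
      by - (simp add: add_mono)
    have Knn: "K \<ge> 0" unfolding K_def using \<mu> by simp
    have KT: "K * real n powr (2 - s) / t \<ge> 0" using Knn tpos by simp
    have "ennreal (exp (- c * real n)) + ennreal (K * real n powr (2 - s) / t) =
          ennreal (exp (- c * real n) + K * real n powr (2 - s) / t)"
      by (rule ennreal_plus[symmetric]) (use KT in auto)
    also have "exp (- c * real n) + K * real n powr (2 - s) / t = bnd n"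
      by (simp only: bnd_def t_def)
    finally have "emeasure (Z_distr p n) {z. real z > t} \<le> ennreal (bnd n)"
      using E by simp
    moreover have bn: "bnd n \<ge> 0" unfolding bnd_def using Knn \<epsilon>
      by (intro add_nonneg_nonneg divide_nonneg_nonneg mult_nonneg_nonneg) auto
    ultimately have "ennreal (measure_pmf.prob (Z_distr p n) {z. real z > t}) \<le> ennreal (bnd n)"
      by (simp add: measure_pmf.emeasure_eq_measure)
    then have "measure_pmf.prob (Z_distr p n) {z. real z > t} \<le> bnd n"
      by (rule ennreal_le_iff[THEN iffD1, OF bn])
    then show ?thesis unfolding Aeq .
  qed
  have lim: "bnd \<longlonglongrightarrow> 0"
  proof -
    have b: "bnd n = exp (- c) ^ n + (K / \<epsilon>) * real n powr (2 - s - r)" for n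
      unfolding bnd_def by (simp add: exp_of_nat_mult[symmetric] powr_diff mult.commute)
    have l1: "(\<lambda>n. exp (- c) ^ n) \<longlonglongrightarrow> 0" using cpos by (intro LIMSEQ_power_zero) simp
    have l2: "(\<lambda>n. real n powr (2 - s - r)) \<longlonglongrightarrow> 0"
      using s1 by (intro tendsto_neg_powr filterlim_real_sequentially) simp
    have "(\<lambda>n. exp (- c) ^ n + (K / \<epsilon>) * real n powr (2 - s - r)) \<longlonglongrightarrow> 0 + (K / \<epsilon>) * 0"
      by (intro tendsto_add l1 tendsto_mult tendsto_const l2)
    then show ?thesis unfolding b by simp
  qed
  have ev: "eventually (\<lambda>n. c * real n \<ge> 12) sequentially"
  proof -
    have "c * real n \<ge> 12" if "n \<ge> nat \<lceil>12 / c\<rceil>" for n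
    proof -
      have "real n \<ge> 12 / c" using that by linarith
      then show ?thesis using cpos by (simp add: divide_le_eq mult.commute)
    qed
    then have "\<forall>n\<ge>nat \<lceil>12 / c\<rceil>. c * real n \<ge> 12" by blast
    then show ?thesis unfolding eventually_sequentially by blast
  qed
  show "((\<lambda>n. measure_pmf.prob (Z_distr p n) {z. \<bar>real z / real n powr (2 - \<gamma> + \<delta>)\<bar> > \<epsilon>}) \<longlongrightarrow> 0) sequentially"
  proof (rule tendsto_sandwich[OF _ _ tendsto_const lim])
    show "eventually (\<lambda>n. 0 \<le> measure_pmf.prob (Z_distr p n) {z. \<bar>real z / real n powr (2 - \<gamma> + \<delta>)\<bar> > \<epsilon>}) sequentially"
      by simp
    show "eventually (\<lambda>n. measure_pmf.prob (Z_distr p n) {z. \<bar>real z / real n powr (2 - \<gamma> + \<delta>)\<bar> > \<epsilon>} \<le> bnd n) sequentially"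
      using ev by (rule eventually_mono) (rule main)
  qed
qed

end
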